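(* Let $(K,v)$ be a valued field and let $\mathcal C=(\rho_i)_{i\in A}$ be a totally ordered family of inner nodes of $\mathcal T$ containing no maximal element, indexed by a totally ordered set $A$ so that $i\mapsto\rho_i$ is an order isomorphism. A nonzero $f\in K[x]$ is $\mathcal C$-stable if and only if $\operatorname{in}_{\rho_i}f$ is a unit in $\mathcal G_{\rho_i}$ for some $i\in A$.
   Context: $\Gamma$ is the value group of $v$, $\Gamma_{\mathbb Q}=\Gamma\otimes\mathbb Q$. $\mathcal T$ is the set of valuations $\mu$ on $K[x]$ with values in $\Gamma_{\mathbb Q}\cup\{\infty\}$, $\mu|_K=v$, $\mu^{-1}(\infty)=\{0\}$, partially ordered by $\mu\le\nu$ iff $\mu(f)\le\nu(f)$ for all $f\in K[x]$. For $\mu\in\mathcal T$ with value group $\Gamma_\mu$, the graded algebra is $\mathcal G_\mu=\bigoplus_{\alpha\in\Gamma_\mu}\mathcal P_\alpha/\mathcal P_\alpha^+$, where $\mathcal P_\alpha=\{g:\mu(g)\ge\alpha\}$, $\mathcal P^+_\alpha=\{g:\mu(g)>\alpha\}$, and $\operatorname{in}_\mu g=g+\mathcal P^+_{\mu(g)}$ for $g\ne0$. A polynomial $g$ is $\mu$-irreducible if $\operatorname{in}_\mu g$ generates a prime homogeneous principal ideal, and $\mu$-minimal if $\operatorname{in}_\mu g\nmid\operatorname{in}_\mu f$ for all nonzero $f$ with $\deg f<\deg g$; a key polynomial for $\mu$ is a monic $\mu$-minimal, $\mu$-irreducible polynomial. $\mu$ is an inner node if it has a key polynomial (equivalently, it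 is not maximal in $\mathcal T$). A polynomial $f$ is $\mathcal C$-stable if there is $i\in A$ with $\rho_i(f)=\rho_j(f)$ for all $j>i$. *)

theory Defs
  imports "HOL-Algebra.Ideal" "HOL-Algebra.Divisibility"
          "HOL-Computational_Algebra.Polynomial"
begin

(* Valuations are represented by functions into an ordered abelian group 'g;
   the value at 0 (which is \<infinity> on paper) is irrelevant and never used:
   every condition below only speaks about nonzero arguments. *)

definition valued_field :: "('a::field \<Rightarrow> 'g::linordered_ab_group_add) \<Rightarrow> bool" where
  "valued_field v \<longleftrightarrow>
     (\<forall>x y. x \<noteq> 0 \<longrightarrow> y \<noteq> 0 \<longrightarrow> v (x * y) = v x + v y) \<and>
     (\<forall>x y. x \<noteq> 0 \<longrightarrow> y \<noteq> 0 \<longrightarrow> x + y \<noteq> 0 \<longrightarrow> min (v x) (v y) \<le> v (x + y))"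

definition value_group :: "('a::field \<Rightarrow> 'g::linordered_ab_group_add) \<Rightarrow> 'g set" where
  "value_group v = {v x | x. x \<noteq> 0}"

definition nmul :: "nat \<Rightarrow> 'g::linordered_ab_group_add \<Rightarrow> 'g" where
  "nmul n \<gamma> = (((+) \<gamma>) ^^ n) 0"

(* Gamma_Q = Gamma \<otimes> Q, realised inside the ambient group 'g *)
definition rat_hull :: "'g::linordered_ab_group_add set \<Rightarrow> 'g set" where
  "rat_hull \<Gamma> = {\<gamma>. \<exists>n>0. nmul n \<gamma> \<in> \<Gamma>}"

(* 'g contains a copy of Gamma \<otimes> Q: every element of Gamma is n-divisible in 'g *)
definition contains_divisible_hull :: "'g::linordered_ab_group_add set \<Rightarrow> bool" where
  "contains_divisible_hull \<Gamma> \<longleftrightarrow> (\<forall>\<gamma>\<in>\<Gamma>. \<forall>n>0. \<exists>\<delta>. nmul n \<delta> = \<gamma>)"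

definition in_T :: "('a::field \<Rightarrow> 'g::linordered_ab_group_add) \<Rightarrow> ('a poly \<Rightarrow> 'g) \<Rightarrow> bool" where
  "in_T v \<mu> \<longleftrightarrow>
     (\<forall>f g. f \<noteq> 0 \<longrightarrow> g \<noteq> 0 \<longrightarrow> \<mu> (f * g) = \<mu> f + \<mu> g) \<and>
     (\<forall>f g. f \<noteq> 0 \<longrightarrow> g \<noteq> 0 \<longrightarrow> f + g \<noteq> 0 \<longrightarrow> min (\<mu> f) (\<mu> g) \<le> \<mu> (f + g)) \<and>
     (\<forall>c. c \<noteq> 0 \<longrightarrow> \<mu> [:c:] = v c) \<and>
     (\<forall>f. f \<noteq> 0 \<longrightarrow> \<mu> f \<in> rat_hull (value_group v))"

definition val_le :: "('a::field poly \<Rightarrow> 'g::linordered_ab_group_add) \<Rightarrow> ('a poly \<Rightarrow> 'g) \<Rightarrow> bool" where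
  "val_le \<mu> \<nu> \<longleftrightarrow> (\<forall>f. f \<noteq> 0 \<longrightarrow> \<mu> f \<le> \<nu> f)"

definition val_less :: "('a::field poly \<Rightarrow> 'g::linordered_ab_group_add) \<Rightarrow> ('a poly \<Rightarrow> 'g) \<Rightarrow> bool" where
  "val_less \<mu> \<nu> \<longleftrightarrow> val_le \<mu> \<nu> \<and> \<not> val_le \<nu> \<mu>"

definition Pge :: "('a::field poly \<Rightarrow> 'g::linordered_ab_group_add) \<Rightarrow> 'g \<Rightarrow> 'a poly set" where
  "Pge \<mu> \<alpha> = {g. g = 0 \<or> \<alpha> \<le> \<mu> g}"

definition Pgt :: "('a::field poly \<Rightarrow> 'g::linordered_ab_group_add) \<Rightarrow> 'g \<Rightarrow> 'a poly set" where
  "Pgt \<mu> \<alpha> = {g. g = 0 \<or> \<alpha> < \<mu> g}"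

definition gcos :: "('a::field poly \<Rightarrow> 'g::linordered_ab_group_add) \<Rightarrow> 'g \<Rightarrow> 'a poly \<Rightarrow> 'a poly set" where
  "gcos \<mu> \<alpha> g = (\<lambda>h. g + h) ` Pgt \<mu> \<alpha>"

definition hcomp :: "('a::field poly \<Rightarrow> 'g::linordered_ab_group_add) \<Rightarrow> 'g \<Rightarrow> 'a poly set set" where
  "hcomp \<mu> \<alpha> = gcos \<mu> \<alpha> ` Pge \<mu> \<alpha>"

definition gsupp :: "('a::field poly \<Rightarrow> 'g::linordered_ab_group_add) \<Rightarrow> ('g \<Rightarrow> 'a poly set) \<Rightarrow> 'g set" where
  "gsupp \<mu> c = {\<alpha>. c \<alpha> \<noteq> Pgt \<mu> \<alpha>}"

definition grep :: "'a set \<Rightarrow> 'a" where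
  "grep X = (SOME x. x \<in> X)"

definition ini :: "('a::field poly \<Rightarrow> 'g::linordered_ab_group_add) \<Rightarrow> 'a poly \<Rightarrow> ('g \<Rightarrow> 'a poly set)" where
  "ini \<mu> g = (\<lambda>\<alpha>. if g \<noteq> 0 \<and> \<alpha> = \<mu> g then gcos \<mu> \<alpha> g else Pgt \<mu> \<alpha>)"

(* G_mu = direct sum of the P_alpha/P_alpha^+, as a HOL-Algebra ring.
   Components at degrees outside the value group are automatically trivial. *)
definition Gr :: "('a::field poly \<Rightarrow> 'g::linordered_ab_group_add) \<Rightarrow> ('g \<Rightarrow> 'a poly set) ring" where
  "Gr \<mu> = \<lparr>carrier = {c. (\<forall>\<alpha>. c \<alpha> \<in> hcomp \<mu> \<alpha>) \<and> finite (gsupp \<mu> c)},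
           monoid.mult = (\<lambda>c d. \<lambda>\<gamma>. gcos \<mu> \<gamma> (\<Sum>\<alpha>\<in>gsupp \<mu> c. grep (c \<alpha>) * grep (d (\<gamma> - \<alpha>)))),
           monoid.one = ini \<mu> 1,
           ring.zero = (\<lambda>\<alpha>. Pgt \<mu> \<alpha>),
           ring.add = (\<lambda>c d. \<lambda>\<alpha>. {x + y | x y. x \<in> c \<alpha> \<and> y \<in> d \<alpha>})\<rparr>"

definition mu_irreducible :: "('a::field poly \<Rightarrow> 'g::linordered_ab_group_add) \<Rightarrow> 'a poly \<Rightarrow> bool" where
  "mu_irreducible \<mu> g \<longleftrightarrow> primeideal (PIdl\<^bsub>Gr \<mu>\<^esub> (ini \<mu> g)) (Gr \<mu>)"

definition mu_minimal :: "('a::field poly \<Rightarrow> 'g::linordered_ab_group_add) \<Rightarrow> 'a poly \<Rightarrow> bool" where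
  "mu_minimal \<mu> g \<longleftrightarrow>
     (\<forall>f. f \<noteq> 0 \<longrightarrow> degree f < degree g \<longrightarrow> \<not> (ini \<mu> g divides\<^bsub>Gr \<mu>\<^esub> ini \<mu> f))"

definition key_polynomial :: "('a::field poly \<Rightarrow> 'g::linordered_ab_group_add) \<Rightarrow> 'a poly \<Rightarrow> bool" where
  "key_polynomial \<mu> \<phi> \<longleftrightarrow> lead_coeff \<phi> = 1 \<and> mu_minimal \<mu> \<phi> \<and> mu_irreducible \<mu> \<phi>"

definition inner_node :: "('a::field poly \<Rightarrow> 'g::linordered_ab_group_add) \<Rightarrow> bool" where
  "inner_node \<mu> \<longleftrightarrow> (\<exists>\<phi>. key_polynomial \<mu> \<phi>)"

definition C_stable :: "'i::linorder set \<Rightarrow> ('i \<Rightarrow> 'a::field poly \<Rightarrow> 'g::linordered_ab_group_add) \<Rightarrow> 'a poly \<Rightarrow> bool" where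
  "C_stable A \<rho> f \<longleftrightarrow> (\<exists>i\<in>A. \<forall>j\<in>A. i < j \<longrightarrow> \<rho> j f = \<rho> i f)"

end

theory Submission
  imports Defs "HOL-Computational_Algebra.Euclidean_Algorithm" "HOL-Computational_Algebra.Polynomial_Factorial"
begin

definition isval :: "('a::field poly \<Rightarrow> 'g::linordered_ab_group_add) \<Rightarrow> bool" where
  "isval \<mu> \<longleftrightarrow> (\<forall>f g. f \<noteq> 0 \<longrightarrow> g \<noteq> 0 \<longrightarrow> \<mu> (f * g) = \<mu> f + \<mu> g) \<and>
     (\<forall>f g. f \<noteq> 0 \<longrightarrow> g \<noteq> 0 \<longrightarrow> f + g \<noteq> 0 \<longrightarrow> min (\<mu> f) (\<mu> g) \<le> \<mu> (f + g))"

lemma inT_isval: "in_T v \<mu> \<Longrightarrow> isval \<mu>"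
  unfolding in_T_def isval_def by blast

lemma vmult: "isval \<mu> \<Longrightarrow> f \<noteq> 0 \<Longrightarrow> g \<noteq> 0 \<Longrightarrow> \<mu> (f * g) = \<mu> f + \<mu> g"
  unfolding isval_def by blast

lemma vadd: "isval \<mu> \<Longrightarrow> f \<noteq> 0 \<Longrightarrow> g \<noteq> 0 \<Longrightarrow> f + g \<noteq> 0 \<Longrightarrow> min (\<mu> f) (\<mu> g) \<le> \<mu> (f + g)"
  unfolding isval_def by blast

lemma vone: "isval \<mu> \<Longrightarrow> \<mu> 1 = 0"
  using vmult[of \<mu> 1 1] by simp

lemma two_zero: "(a::'g::linordered_ab_group_add) + a = 0 \<Longrightarrow> a = 0"
  by (metis add_pos_pos add_neg_neg less_irrefl linorder_neqE)

lemma vmone: "isval \<mu> \<Longrightarrow> \<mu> (-1) = 0"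
  using vmult[of \<mu> "-1" "-1"] vone[of \<mu>] two_zero by fastforce

lemma vminus: "isval \<mu> \<Longrightarrow> f \<noteq> 0 \<Longrightarrow> \<mu> (- f) = \<mu> f"
  using vmult[of \<mu> "-1" f] vmone[of \<mu>] by simp

lemma vstrict: assumes "isval \<mu>" "f \<noteq> 0" "g \<noteq> 0" "\<mu> f < \<mu> g"
  shows "f + g \<noteq> 0 \<and> \<mu> (f + g) = \<mu> f"
proof -
  have ne: "f + g \<noteq> 0"
  proof
    assume "f + g = 0" then have "g = - f" by (metis minus_unique)
    then show False using assms vminus[of \<mu> f] by simp
  qed
  have 1: "min (\<mu> f) (\<mu> g) \<le> \<mu> (f + g)" using vadd assms ne by blast
  have "f = (f + g) + (- g)" by simp
  moreover have "-g \<noteq> 0" using assms by simp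
  ultimately have "min (\<mu> (f+g)) (\<mu> (-g)) \<le> \<mu> f" using vadd[of \<mu> "f+g" "-g"] assms ne by simp
  then have "min (\<mu> (f+g)) (\<mu> g) \<le> \<mu> f" using vminus[of \<mu> g] assms by simp
  then show ?thesis using 1 ne assms by (auto simp: min_def split: if_splits)
qed

lemma Pgt0: "0 \<in> Pgt \<mu> \<alpha>" by (simp add: Pgt_def)
lemma Pge0: "0 \<in> Pge \<mu> \<alpha>" by (simp add: Pge_def)

lemma Pgt_add: assumes "isval \<mu>" "x \<in> Pgt \<mu> \<alpha>" "y \<in> Pgt \<mu> \<alpha>" shows "x + y \<in> Pgt \<mu> \<alpha>"
proof (cases "x = 0 \<or> y = 0 \<or> x + y = 0")
  case True then show ?thesis using assms by (auto simp: Pgt_def)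
next
  case False
  then have "min (\<mu> x) (\<mu> y) \<le> \<mu> (x + y)" using vadd assms(1) by blast
  then show ?thesis using assms False by (auto simp: Pgt_def min_def split: if_splits)
qed

lemma Pge_add: assumes "isval \<mu>" "x \<in> Pge \<mu> \<alpha>" "y \<in> Pge \<mu> \<alpha>" shows "x + y \<in> Pge \<mu> \<alpha>"
proof (cases "x = 0 \<or> y = 0 \<or> x + y = 0")
  case True then show ?thesis using assms by (auto simp: Pge_def)
next
  case False
  then have "min (\<mu> x) (\<mu> y) \<le> \<mu> (x + y)" using vadd assms(1) by blast
  then show ?thesis using assms False by (auto simp: Pge_def min_def split: if_splits)
qed

lemma Pgt_minus: assumes "isval \<mu>" "x \<in> Pgt \<mu> \<alpha>" shows "- x \<in> Pgt \<mu> \<alpha>"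
  using assms vminus[of \<mu> x] by (cases "x = 0") (auto simp: Pgt_def)

lemma Pgt_diff: assumes "isval \<mu>" "x \<in> Pgt \<mu> \<alpha>" "y \<in> Pgt \<mu> \<alpha>" shows "x - y \<in> Pgt \<mu> \<alpha>"
  using Pgt_add[OF assms(1,2) Pgt_minus[OF assms(1,3)]] by simp

lemma Pgt_Pge: "x \<in> Pgt \<mu> \<alpha> \<Longrightarrow> x \<in> Pge \<mu> \<alpha>"
  by (auto simp: Pgt_def Pge_def)

lemma Pge_Pgt_mult: assumes "isval \<mu>" "x \<in> Pge \<mu> \<alpha>" "y \<in> Pgt \<mu> \<beta>" shows "x * y \<in> Pgt \<mu> (\<alpha> + \<beta>)"
proof (cases "x = 0 \<or> y = 0")
  case True then show ?thesis by (auto simp: Pgt_def)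
next
  case False
  then have "\<mu> (x * y) = \<mu> x + \<mu> y" using vmult assms(1) by blast
  moreover have "\<alpha> + \<beta> < \<mu> x + \<mu> y" using assms False
    by (auto simp: Pgt_def Pge_def intro: add_le_less_mono)
  ultimately show ?thesis by (simp add: Pgt_def)
qed

lemma Pgt_Pge_mult: assumes "isval \<mu>" "x \<in> Pgt \<mu> \<alpha>" "y \<in> Pge \<mu> \<beta>" shows "x * y \<in> Pgt \<mu> (\<alpha> + \<beta>)"
  using Pge_Pgt_mult[OF assms(1,3,2)] by (simp add: mult.commute add.commute)

lemma Pgt_sum: assumes "isval \<mu>" "\<forall>a\<in>S. T a \<in> Pgt \<mu> \<gamma>" shows "sum T S \<in> Pgt \<mu> \<gamma>"
  using assms(2)
proof (induction S rule: infinite_finite_induct)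
  case (infinite A) then show ?case by (simp add: Pgt0)
next
  case empty then show ?case by (simp add: Pgt0)
next
  case (insert x F) then show ?case using Pgt_add[OF assms(1)] by simp
qed

lemma Pgt_sum_but: assumes "isval \<mu>" "finite S" "\<forall>a\<in>S. a \<noteq> a0 \<longrightarrow> T a \<in> Pgt \<mu> \<gamma>"
  "a0 \<notin> S \<longrightarrow> T a0 \<in> Pgt \<mu> \<gamma>"
  shows "sum T S - T a0 \<in> Pgt \<mu> \<gamma>"
proof (cases "a0 \<in> S")
  case True
  then have "sum T S = T a0 + sum T (S - {a0})" using assms(2) by (simp add: sum.remove)
  moreover have "sum T (S - {a0}) \<in> Pgt \<mu> \<gamma>" using Pgt_sum[OF assms(1), of "S - {a0}" T] assms(3) by blast
  ultimately show ?thesis by simp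
next
  case False
  then have "\<forall>a\<in>S. T a \<in> Pgt \<mu> \<gamma>" using assms(3) by auto
  then show ?thesis using Pgt_diff[OF assms(1) Pgt_sum[OF assms(1)]] assms(4) False by blast
qed

lemma gcos_mem: "z \<in> gcos \<mu> \<alpha> a \<longleftrightarrow> z - a \<in> Pgt \<mu> \<alpha>"
  unfolding gcos_def by (auto simp: image_iff) (metis add_diff_cancel_left' diff_add_cancel add.commute)

lemma gcos_eq: assumes "isval \<mu>" shows "gcos \<mu> \<alpha> a = gcos \<mu> \<alpha> b \<longleftrightarrow> a - b \<in> Pgt \<mu> \<alpha>"
proof
  assume "gcos \<mu> \<alpha> a = gcos \<mu> \<alpha> b"
  moreover have "a \<in> gcos \<mu> \<alpha> a" using gcos_mem Pgt0 by (metis diff_self)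
  ultimately show "a - b \<in> Pgt \<mu> \<alpha>" using gcos_mem by blast
next
  assume d: "a - b \<in> Pgt \<mu> \<alpha>"
  have "z - a \<in> Pgt \<mu> \<alpha> \<longleftrightarrow> z - b \<in> Pgt \<mu> \<alpha>" for z
  proof
    assume "z - a \<in> Pgt \<mu> \<alpha>" then show "z - b \<in> Pgt \<mu> \<alpha>"
      using Pgt_add[OF assms _ d] by (metis add_diff_eq diff_add_cancel)
  next
    assume "z - b \<in> Pgt \<mu> \<alpha>" then show "z - a \<in> Pgt \<mu> \<alpha>"
      using Pgt_diff[OF assms _ d] by (metis diff_diff_eq2 diff_add_cancel add_diff_eq)
  qed
  then show "gcos \<mu> \<alpha> a = gcos \<mu> \<alpha> b" using gcos_mem by blast
qed

lemma Pgt_gcos0: "Pgt \<mu> \<alpha> = gcos \<mu> \<alpha> 0"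
  unfolding gcos_def by simp

lemma grep_gcos: "grep (gcos \<mu> \<alpha> a) - a \<in> Pgt \<mu> \<alpha>"
proof -
  have "a \<in> gcos \<mu> \<alpha> a" using gcos_mem Pgt0 by (metis diff_self)
  then have "grep (gcos \<mu> \<alpha> a) \<in> gcos \<mu> \<alpha> a" unfolding grep_def by (rule someI)
  then show ?thesis using gcos_mem by blast
qed

lemma grep_Pgt: "grep (Pgt \<mu> \<alpha>) \<in> Pgt \<mu> \<alpha>"
  unfolding grep_def using Pgt0 by (rule someI)

lemma notin_Pgt_self: "f \<noteq> 0 \<Longrightarrow> f \<notin> Pgt \<mu> (\<mu> f)"
  by (simp add: Pgt_def)

lemma gsupp_ini: assumes "isval \<mu>" "f \<noteq> 0" shows "gsupp \<mu> (ini \<mu> f) = {\<mu> f}"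
proof -
  have "gcos \<mu> (\<mu> f) f \<noteq> Pgt \<mu> (\<mu> f)"
    using gcos_eq[OF assms(1), of "\<mu> f" f 0] notin_Pgt_self[OF assms(2)] Pgt_gcos0 by (metis diff_zero)
  then show ?thesis using assms by (auto simp: gsupp_def ini_def)
qed

lemma gcos_Pge: assumes "isval \<mu>" "b \<in> Pge \<mu> \<alpha>" "z \<in> gcos \<mu> \<alpha> b" shows "z \<in> Pge \<mu> \<alpha>"
proof -
  have "z - b \<in> Pge \<mu> \<alpha>" using assms(3) gcos_mem Pgt_Pge by blast
  then show ?thesis using Pge_add[OF assms(1) _ assms(2)] by fastforce
qed

lemma ini_carrier: assumes "isval \<mu>" "f \<noteq> 0" shows "ini \<mu> f \<in> carrier (Gr \<mu>)"
proof -
  have "ini \<mu> f \<alpha> \<in> hcomp \<mu> \<alpha>" for \<alpha>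
  proof (cases "\<alpha> = \<mu> f")
    case True
    then have "f \<in> Pge \<mu> \<alpha>" by (simp add: Pge_def)
    then show ?thesis using True assms by (simp add: ini_def hcomp_def)
  next
    case False
    have "Pgt \<mu> \<alpha> \<in> gcos \<mu> \<alpha> ` Pge \<mu> \<alpha>" using Pge0 Pgt_gcos0 by (metis image_eqI)
    then show ?thesis using False by (simp add: ini_def hcomp_def)
  qed
  then show ?thesis using gsupp_ini[OF assms] by (simp add: Gr_def)
qed

lemma Gr_mult: "c \<otimes>\<^bsub>Gr \<mu>\<^esub> d = (\<lambda>\<gamma>. gcos \<mu> \<gamma> (\<Sum>\<alpha>\<in>gsupp \<mu> c. grep (c \<alpha>) * grep (d (\<gamma> - \<alpha>))))"
  by (simp add: Gr_def)

lemma Gr_one: "\<one>\<^bsub>Gr \<mu>\<^esub> = ini \<mu> 1"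
  by (simp add: Gr_def)

lemma grep_ini_self: assumes "f \<noteq> 0" shows "grep (ini \<mu> f (\<mu> f)) - f \<in> Pgt \<mu> (\<mu> f)"
  using assms grep_gcos by (simp add: ini_def)

lemma grep_ini_other: assumes "\<alpha> \<noteq> \<mu> f" shows "grep (ini \<mu> f \<alpha>) \<in> Pgt \<mu> \<alpha>"
  using assms grep_Pgt by (simp add: ini_def)

lemma grep_ini_Pge: assumes "isval \<mu>" "f \<noteq> 0" shows "grep (ini \<mu> f \<alpha>) \<in> Pge \<mu> \<alpha>"
proof (cases "\<alpha> = \<mu> f")
  case True
  then have "f \<in> Pge \<mu> \<alpha>" by (simp add: Pge_def)
  moreover have "grep (ini \<mu> f \<alpha>) - f \<in> Pge \<mu> \<alpha>" using grep_ini_self[OF assms(2)] True Pgt_Pge by blast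
  ultimately show ?thesis using Pge_add[OF assms(1)] by fastforce
next
  case False then show ?thesis using grep_ini_other Pgt_Pge by blast
qed

lemma mult_ini: assumes "isval \<mu>" "f \<noteq> 0" "g \<noteq> 0"
  shows "ini \<mu> f \<otimes>\<^bsub>Gr \<mu>\<^esub> ini \<mu> g = ini \<mu> (f * g)"
proof (rule ext)
  fix \<gamma>
  have fg: "f * g \<noteq> 0" "\<mu> (f * g) = \<mu> f + \<mu> g" using assms vmult by auto
  define f' where "f' = grep (ini \<mu> f (\<mu> f))"
  define g' where "g' = grep (ini \<mu> g (\<gamma> - \<mu> f))"
  have L: "(ini \<mu> f \<otimes>\<^bsub>Gr \<mu>\<^esub> ini \<mu> g) \<gamma> = gcos \<mu> \<gamma> (f' * g')"
    by (simp add: Gr_mult gsupp_ini[OF assms(1,2)] f'_def g'_def)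
  have f'1: "f' - f \<in> Pgt \<mu> (\<mu> f)" using grep_ini_self[OF assms(2)] f'_def by simp
  have f'2: "f' \<in> Pge \<mu> (\<mu> f)" using grep_ini_Pge[OF assms(1,2)] f'_def by simp
  show "(ini \<mu> f \<otimes>\<^bsub>Gr \<mu>\<^esub> ini \<mu> g) \<gamma> = ini \<mu> (f * g) \<gamma>"
  proof (cases "\<gamma> = \<mu> (f * g)")
    case True
    then have ga: "\<gamma> - \<mu> f = \<mu> g" using fg by (simp add: algebra_simps)
    have g'1: "g' - g \<in> Pgt \<mu> (\<mu> g)" using grep_ini_self[OF assms(3)] g'_def ga by simp
    have g'2: "g' \<in> Pge \<mu> (\<mu> g)" using grep_ini_Pge[OF assms(1,3)] g'_def ga by simp
    have gP: "g \<in> Pge \<mu> (\<mu> g)" by (simp add: Pge_def)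
    have "f' * g' - f * g = (f' - f) * g' + f * (g' - g)" by (simp add: algebra_simps)
    moreover have "(f' - f) * g' \<in> Pgt \<mu> \<gamma>" using Pgt_Pge_mult[OF assms(1) f'1 g'2] True fg by simp
    moreover have "f * (g' - g) \<in> Pgt \<mu> \<gamma>" using Pge_Pgt_mult[OF assms(1) _ g'1, of f "\<mu> f"] True fg
      by (simp add: Pge_def)
    ultimately have "f' * g' - f * g \<in> Pgt \<mu> \<gamma>" using Pgt_add[OF assms(1)] by simp
    then have "gcos \<mu> \<gamma> (f' * g') = gcos \<mu> \<gamma> (f * g)" using gcos_eq[OF assms(1)] by blast
    then show ?thesis using L True fg by (simp add: ini_def)
  next
    case False
    then have "\<gamma> - \<mu> f \<noteq> \<mu> g" using fg by (auto simp: algebra_simps)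
    then have "g' \<in> Pgt \<mu> (\<gamma> - \<mu> f)" using grep_ini_other g'_def by blast
    then have "f' * g' \<in> Pgt \<mu> \<gamma>" using Pge_Pgt_mult[OF assms(1) f'2] by fastforce
    then have "gcos \<mu> \<gamma> (f' * g') = Pgt \<mu> \<gamma>" using gcos_eq[OF assms(1), of \<gamma> "f' * g'" 0] Pgt_gcos0[symmetric] by simp
    then show ?thesis using L False by (simp add: ini_def)
  qed
qed

lemma val_close1: assumes "isval \<mu>" "h - 1 \<in> Pgt \<mu> 0" shows "\<mu> h = 0"
proof (cases "h = 1")
  case True then show ?thesis using vone[OF assms(1)] by simp
next
  case False
  then have ne: "h - 1 \<noteq> 0" by simp
  then have "0 < \<mu> (h - 1)" using assms(2) by (simp add: Pgt_def)
  then have "\<mu> 1 < \<mu> (h - 1)" using vone[OF assms(1)] by simp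
  then have "\<mu> (1 + (h - 1)) = \<mu> 1" using vstrict[OF assms(1) _ ne, of 1] by simp
  then show ?thesis using vone[OF assms(1)] by simp
qed

lemma ini_close1: assumes "isval \<mu>" "h \<noteq> 0" "h - 1 \<in> Pgt \<mu> 0" shows "ini \<mu> h = ini \<mu> 1"
proof -
  have "\<mu> h = 0" "\<mu> 1 = 0" using val_close1[OF assms(1,3)] vone[OF assms(1)] by auto
  moreover have "gcos \<mu> 0 h = gcos \<mu> 0 1" using gcos_eq[OF assms(1)] assms(3) by blast
  ultimately show ?thesis using assms(2) by (auto simp: ini_def fun_eq_iff)
qed

lemma unit_of_close: assumes "isval \<mu>" "f \<noteq> 0" "s \<noteq> 0" "f * s - 1 \<in> Pgt \<mu> 0"
  shows "ini \<mu> f \<in> Units (Gr \<mu>)"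
proof -
  have "f * s \<noteq> 0" using assms by simp
  then have e: "ini \<mu> (f * s) = \<one>\<^bsub>Gr \<mu>\<^esub>" using ini_close1[OF assms(1) _ assms(4)] Gr_one by metis
  have "ini \<mu> s \<otimes>\<^bsub>Gr \<mu>\<^esub> ini \<mu> f = \<one>\<^bsub>Gr \<mu>\<^esub>"
    using mult_ini[OF assms(1,3,2)] e by (simp add: mult.commute)
  moreover have "ini \<mu> f \<otimes>\<^bsub>Gr \<mu>\<^esub> ini \<mu> s = \<one>\<^bsub>Gr \<mu>\<^esub>"
    using mult_ini[OF assms(1,2,3)] e by simp
  ultimately show ?thesis using ini_carrier[OF assms(1,2)] ini_carrier[OF assms(1,3)]
    unfolding Units_def by blast
qed

lemma grep_carrier_Pge: assumes "isval \<mu>" "x \<in> carrier (Gr \<mu>)" shows "grep (x \<alpha>) \<in> Pge \<mu> \<alpha>"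
proof -
  have "x \<alpha> \<in> hcomp \<mu> \<alpha>" using assms(2) by (simp add: Gr_def)
  then obtain b where b: "b \<in> Pge \<mu> \<alpha>" "x \<alpha> = gcos \<mu> \<alpha> b" by (auto simp: hcomp_def)
  have "grep (gcos \<mu> \<alpha> b) \<in> gcos \<mu> \<alpha> b" using grep_gcos gcos_mem by blast
  then show ?thesis using gcos_Pge[OF assms(1) b(1)] b(2) by simp
qed

lemma close_of_unit: assumes "isval \<mu>" "f \<noteq> 0" "ini \<mu> f \<in> Units (Gr \<mu>)"
  shows "\<exists>a. a \<noteq> 0 \<and> a * f - 1 \<in> Pgt \<mu> 0"
proof -
  obtain x where x: "x \<in> carrier (Gr \<mu>)" "x \<otimes>\<^bsub>Gr \<mu>\<^esub> ini \<mu> f = \<one>\<^bsub>Gr \<mu>\<^esub>"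
    using assms(3) unfolding Units_def by blast
  define T where "T = (\<lambda>\<alpha>. grep (x \<alpha>) * grep (ini \<mu> f (0 - \<alpha>)))"
  define S where "S = gsupp \<mu> x"
  have fin: "finite S" using x(1) by (simp add: Gr_def S_def)
  have "gcos \<mu> 0 (sum T S) = ini \<mu> 1 0"
    using fun_cong[OF x(2), of 0] by (simp add: Gr_mult Gr_one T_def S_def)
  also have "\<dots> = gcos \<mu> 0 1" using vone[OF assms(1)] by (simp add: ini_def)
  finally have s1: "sum T S - 1 \<in> Pgt \<mu> 0" using gcos_eq[OF assms(1)] by blast
  define a where "a = grep (x (- \<mu> f))"
  define f' where "f' = grep (ini \<mu> f (\<mu> f))"
  have Ta: "T (- \<mu> f) = a * f'" by (simp add: T_def a_def f'_def)
  have aP: "a \<in> Pge \<mu> (- \<mu> f)" using grep_carrier_Pge[OF assms(1) x(1)] a_def by simp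
  have f'1: "f' - f \<in> Pgt \<mu> (\<mu> f)" using grep_ini_self[OF assms(2)] f'_def by simp
  have f'2: "f' \<in> Pge \<mu> (\<mu> f)" using grep_ini_Pge[OF assms(1,2)] f'_def by simp
  have oth: "T \<alpha> \<in> Pgt \<mu> 0" if "\<alpha> \<noteq> - \<mu> f" for \<alpha>
  proof -
    have "0 - \<alpha> \<noteq> \<mu> f" using that by (metis diff_0 minus_minus)
    then have "grep (ini \<mu> f (0 - \<alpha>)) \<in> Pgt \<mu> (0 - \<alpha>)" using grep_ini_other by blast
    then have "T \<alpha> \<in> Pgt \<mu> (\<alpha> + (0 - \<alpha>))"
      unfolding T_def using Pge_Pgt_mult[OF assms(1) grep_carrier_Pge[OF assms(1) x(1)]] by blast
    then show ?thesis by simp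
  qed
  have notin: "- \<mu> f \<notin> S \<longrightarrow> T (- \<mu> f) \<in> Pgt \<mu> 0"
  proof
    assume "- \<mu> f \<notin> S"
    then have "x (- \<mu> f) = Pgt \<mu> (- \<mu> f)" by (simp add: S_def gsupp_def)
    then have "a \<in> Pgt \<mu> (- \<mu> f)" using grep_Pgt a_def by metis
    then have "a * f' \<in> Pgt \<mu> (- \<mu> f + \<mu> f)" using Pgt_Pge_mult[OF assms(1) _ f'2] by blast
    then show "T (- \<mu> f) \<in> Pgt \<mu> 0" using Ta by simp
  qed
  have s2: "sum T S - T (- \<mu> f) \<in> Pgt \<mu> 0"
    using Pgt_sum_but[OF assms(1) fin] oth notin by blast
  have s3: "a * f' - 1 \<in> Pgt \<mu> 0"
    using Pgt_diff[OF assms(1) s1 s2] Ta by (simp add: algebra_simps)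
  have s4: "a * (f' - f) \<in> Pgt \<mu> 0"
    using Pge_Pgt_mult[OF assms(1) aP f'1] by simp
  have s5: "a * f - 1 \<in> Pgt \<mu> 0"
    using Pgt_diff[OF assms(1) s3 s4] by (simp add: algebra_simps)
  have "a \<noteq> 0"
  proof
    assume "a = 0"
    then have "-1 \<in> Pgt \<mu> 0" using s5 by simp
    then show False using vmone[OF assms(1)] by (simp add: Pgt_def)
  qed
  then show ?thesis using s5 by blast
qed

lemma Pgt_mono: "val_le \<mu> \<nu> \<Longrightarrow> x \<in> Pgt \<mu> \<alpha> \<Longrightarrow> x \<in> Pgt \<nu> \<alpha>"
  unfolding val_le_def Pgt_def by (auto intro: less_le_trans)

lemma stable_of_close: assumes "isval \<mu>" "isval \<nu>" "val_le \<mu> \<nu>" "f \<noteq> 0" "a \<noteq> 0"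
  "a * f - 1 \<in> Pgt \<mu> 0" shows "\<nu> f = \<mu> f"
proof -
  have "\<mu> (a * f) = 0" using val_close1[OF assms(1,6)] .
  moreover have "\<nu> (a * f) = 0" using val_close1[OF assms(2) Pgt_mono[OF assms(3,6)]] .
  ultimately have e: "\<mu> a + \<mu> f = \<nu> a + \<nu> f" using vmult assms by metis
  have "\<mu> a \<le> \<nu> a" "\<mu> f \<le> \<nu> f" using assms(3,4,5) by (auto simp: val_le_def)
  then show ?thesis using e by (metis add_le_less_mono order.not_eq_order_implies_strict less_irrefl)
qed

lemma core:
  fixes \<mu> \<nu> :: "'a::field poly \<Rightarrow> 'g::linordered_ab_group_add"
  assumes vm: "isval \<mu>" and vn: "isval \<nu>" and le: "val_le \<mu> \<nu>"
    and const: "\<forall>c. c \<noteq> 0 \<longrightarrow> \<mu> [:c:] = \<nu> [:c:]"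
    and ex: "\<exists>h. h \<noteq> 0 \<and> \<mu> h < \<nu> h" and f0: "f \<noteq> 0" and eq: "\<mu> f = \<nu> f"
  shows "\<exists>s. s \<noteq> 0 \<and> f * s - 1 \<in> Pgt \<nu> 0"
proof -
  have lev: "\<mu> h \<le> \<nu> h" if "h \<noteq> 0" for h using le that by (simp add: val_le_def)
  obtain \<phi> where ph: "\<phi> \<noteq> 0 \<and> \<mu> \<phi> < \<nu> \<phi>"
     and phmin: "\<forall>h. h \<noteq> 0 \<and> \<mu> h < \<nu> h \<longrightarrow> degree \<phi> \<le> degree h"
    using ex_has_least_nat[of "\<lambda>h. h \<noteq> 0 \<and> \<mu> h < \<nu> h" _ degree] ex by blast
  have small: "\<mu> h = \<nu> h" if "h \<noteq> 0" "degree h < degree \<phi>" for h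
  proof -
    have "\<not> \<mu> h < \<nu> h" using phmin that by (meson leD)
    then show ?thesis using lev[OF that(1)] by simp
  qed
  have dpos: "degree \<phi> > 0"
  proof (rule ccontr)
    assume "\<not> degree \<phi> > 0"
    then have "\<phi> = [:coeff \<phi> 0:]" using degree0_coeffs[of \<phi>] by force
    moreover have "coeff \<phi> 0 \<noteq> 0" using ph calculation by (metis pCons_0_0)
    then have "\<mu> [:coeff \<phi> 0:] = \<nu> [:coeff \<phi> 0:]" using const by blast
    then show False using ph calculation by simp
  qed
  define q where "q = f div \<phi>"
  define r where "r = f mod \<phi>"
  have fqr: "f = q * \<phi> + r" unfolding q_def r_def by simp
  have r0: "r \<noteq> 0"
  proof
    assume "r = 0"
    then have fq: "f = q * \<phi>" using fqr by simp
    then have q0: "q \<noteq> 0" using f0 by auto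
    have "\<mu> f = \<mu> q + \<mu> \<phi>" "\<nu> f = \<nu> q + \<nu> \<phi>"
      using fq vmult[OF vm q0, of \<phi>] vmult[OF vn q0, of \<phi>] ph by auto
    then have "\<mu> f < \<nu> f" using add_le_less_mono[OF lev[OF q0], of "\<mu> \<phi>" "\<nu> \<phi>"] ph by simp
    then show False using eq by simp
  qed
  have dr: "degree r < degree \<phi>" using degree_mod_less'[of \<phi> f] ph r0 unfolding r_def by simp
  have mr: "\<mu> r = \<nu> r" using small r0 dr by blast
  have key: "\<nu> r = \<nu> f \<and> q * \<phi> \<in> Pgt \<nu> (\<nu> r)"
  proof (cases "q = 0")
    case True then show ?thesis using fqr by (simp add: Pgt_def)
  next
    case False
    define P where "P = q * \<phi>"
    have P0: "P \<noteq> 0" using False ph by (simp add: P_def)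
    have mP: "\<mu> P < \<nu> P" using vmult[OF vm False, of \<phi>] vmult[OF vn False, of \<phi>] ph
       add_le_less_mono[OF lev[OF False], of "\<mu> \<phi>" "\<nu> \<phi>"] unfolding P_def by simp
    have lt: "\<nu> P > \<nu> r"
    proof (rule ccontr)
      assume "\<not> \<nu> P > \<nu> r"
      then have a: "\<nu> P \<le> \<nu> r" by simp
      have "min (\<nu> P) (\<nu> r) \<le> \<nu> f" using vadd[OF vn P0 r0] f0 fqr P_def by simp
      then have "\<nu> P \<le> \<nu> f" using a by (simp add: min_def split: if_splits)
      then have b: "\<mu> P < \<mu> f" using mP eq by simp
      have c: "\<mu> P < \<mu> r" using mP a mr by simp
      have "P = f + (- r)" using fqr P_def by simp
      then have "min (\<mu> f) (\<mu> (- r)) \<le> \<mu> P" using vadd[OF vm f0, of "- r"] r0 P0 by simp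
      then have "min (\<mu> f) (\<mu> r) \<le> \<mu> P" using vminus[OF vm r0] by simp
      then show False using b c by (simp add: min_def split: if_splits)
    qed
    have "\<nu> (r + P) = \<nu> r" using vstrict[OF vn r0 P0 lt] by simp
    then show ?thesis using lt fqr P_def by (simp add: Pgt_def add.commute)
  qed
  \<comment> \<open>inverse of r modulo phi\<close>
  define I where "I = {g. g \<noteq> 0 \<and> (\<exists>a b. g = a * r + b * \<phi>)}"
  have rI: "r \<in> I"
  proof -
    have "r = 1 * r + 0 * \<phi>" by simp
    then show ?thesis unfolding I_def using r0 by blast
  qed
  obtain d where dI: "d \<in> I" and dmin: "\<forall>g. g \<in> I \<longrightarrow> degree d \<le> degree g"
    using ex_has_least_nat[of "\<lambda>g. g \<in> I" r degree] rI by blast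
  obtain a b where dab: "d = a * r + b * \<phi>" and d0: "d \<noteq> 0" using dI unfolding I_def by blast
  have dvdI: "d dvd x" if "x = a' * r + b' * \<phi>" for x a' b'
  proof (rule ccontr)
    assume nd: "\<not> d dvd x"
    then have m0: "x mod d \<noteq> 0" by (simp add: dvd_eq_mod_eq_0)
    have "x mod d = x - (x div d) * d" by (simp add: minus_div_mult_eq_mod)
    also have "\<dots> = (a' - (x div d) * a) * r + (b' - (x div d) * b) * \<phi>"
    proof -
      define k where "k = x div d"
      have "x - k * d = (a' - k * a) * r + (b' - k * b) * \<phi>"
        unfolding that dab by (simp add: algebra_simps)
      then show ?thesis unfolding k_def .
    qed
    finally have "x mod d \<in> I" using m0 unfolding I_def by blast
    then have "degree d \<le> degree (x mod d)" using dmin by blast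
    moreover have "degree (x mod d) < degree d" using degree_mod_less'[OF d0 m0] .
    ultimately show False by simp
  qed
  have dvr: "d dvd r" using dvdI[of r 1 0] by simp
  have dvp: "d dvd \<phi>" using dvdI[of \<phi> 0 1] by simp
  have ddeg: "degree d = 0"
  proof (rule ccontr)
    assume dd: "degree d \<noteq> 0"
    obtain e where e: "\<phi> = d * e" using dvp by (auto elim: dvdE)
    have e0: "e \<noteq> 0" using e ph by auto
    have "degree d \<le> degree r" using dvr r0 by (simp add: dvd_imp_degree_le)
    then have dl: "degree d < degree \<phi>" using dr by simp
    have "degree \<phi> = degree d + degree e" using e d0 e0 by (simp add: degree_mult_eq)
    then have el: "degree e < degree \<phi>" using dd by simp
    have "\<mu> \<phi> = \<mu> d + \<mu> e" "\<nu> \<phi> = \<nu> d + \<nu> e" using e vmult[OF vm d0 e0] vmult[OF vn d0 e0] by auto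
    then have "\<mu> \<phi> = \<nu> \<phi>" using small[OF d0 dl] small[OF e0 el] by simp
    then show False using ph by simp
  qed
  obtain c where c: "d = [:c:]" using degree0_coeffs[OF ddeg] by blast
  have c0: "c \<noteq> 0" using c d0 by simp
  have "[:inverse c:] * d = 1" using c c0 by (simp add: one_pCons)
  then have st0: "([:inverse c:] * a) * r + ([:inverse c:] * b) * \<phi> = 1"
    using dab by (simp add: algebra_simps)
  define s0 where "s0 = [:inverse c:] * a"
  define t0 where "t0 = [:inverse c:] * b"
  have st0: "s0 * r + t0 * \<phi> = 1" using st0 unfolding s0_def t0_def .
  define s where "s = s0 mod \<phi>"
  define t where "t = t0 + r * (s0 div \<phi>)"
  have st: "r * s + t * \<phi> = 1"
  proof -
    have "r * s0 = r * ((s0 div \<phi>) * \<phi> + s0 mod \<phi>)" by simp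
    also have "\<dots> = r * s + r * (s0 div \<phi>) * \<phi>" unfolding s_def
      by (simp only: distrib_left mult.assoc ac_simps)
    finally have "r * s0 = r * s + r * (s0 div \<phi>) * \<phi>" .
    then show ?thesis using st0 unfolding t_def by (simp add: algebra_simps)
  qed
  have s0': "s \<noteq> 0"
  proof
    assume "s = 0"
    then have "t * \<phi> = 1" using st by simp
    then have "degree (t * \<phi>) = 0" by simp
    moreover have "t \<noteq> 0" using \<open>t * \<phi> = 1\<close> by auto
    ultimately show False using dpos ph by (simp add: degree_mult_eq)
  qed
  have ds: "degree s < degree \<phi>" using degree_mod_less'[of \<phi> s0] ph s0' unfolding s_def by simp
  have ms: "\<mu> s = \<nu> s" using small s0' ds by blast
  have rs0: "r * s \<noteq> 0" using r0 s0' by simp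
  have mrs: "\<mu> (r * s) = \<nu> (r * s)" using vmult[OF vm r0 s0'] vmult[OF vn r0 s0'] mr ms by simp
  have rs1: "r * s - 1 \<in> Pgt \<nu> 0"
  proof (cases "t = 0")
    case True then show ?thesis using st by (simp add: Pgt_def)
  next
    case False
    have tp0: "t * \<phi> \<noteq> 0" using False ph by simp
    have mtp: "\<mu> (t * \<phi>) < \<nu> (t * \<phi>)" using vmult[OF vm False, of \<phi>] vmult[OF vn False, of \<phi>] ph
       add_le_less_mono[OF lev[OF False], of "\<mu> \<phi>" "\<nu> \<phi>"] by simp
    have pos: "0 < \<nu> (t * \<phi>)"
    proof (rule ccontr)
      assume "\<not> 0 < \<nu> (t * \<phi>)"
      then have neg: "\<mu> (t * \<phi>) < \<mu> 1" using mtp vone[OF vm] by simp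
      have eqm: "\<mu> (r * s) = \<mu> (t * \<phi>)"
      proof (rule ccontr)
        assume ne: "\<mu> (r * s) \<noteq> \<mu> (t * \<phi>)"
        show False
        proof (cases "\<mu> (r * s) < \<mu> (t * \<phi>)")
          case True
          then have "\<mu> (r * s + t * \<phi>) = \<mu> (r * s)" using vstrict[OF vm rs0 tp0] by blast
          then show False using st neg True by simp
        next
          case False
          then have "\<mu> (t * \<phi>) < \<mu> (r * s)" using ne by simp
          then have "\<mu> (t * \<phi> + r * s) = \<mu> (t * \<phi>)" using vstrict[OF vm tp0 rs0] by blast
          then show False using st neg by (simp add: add.commute)
        qed
      qed
      then have "\<nu> (r * s) < \<nu> (t * \<phi>)" using mrs mtp by simp
      then have "\<nu> (r * s + t * \<phi>) = \<nu> (r * s)" using vstrict[OF vn rs0 tp0] by blast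
      then have "\<nu> 1 = \<mu> (t * \<phi>)" using st mrs eqm by simp
      then show False using neg vone[OF vn] vone[OF vm] by simp
    qed
    have "r * s - 1 = - (t * \<phi>)" using st by (simp add: algebra_simps)
    then show ?thesis using pos vminus[OF vn tp0] by (simp add: Pgt_def)
  qed
  have nrs: "\<nu> (r * s) = 0" using val_close1[OF vn rs1] .
  have "q * \<phi> * s \<in> Pgt \<nu> (\<nu> r + \<nu> s)"
    using Pgt_Pge_mult[OF vn conjunct2[OF key], of s "\<nu> s"] by (simp add: Pge_def)
  then have qps: "q * \<phi> * s \<in> Pgt \<nu> 0" using vmult[OF vn r0 s0'] nrs by simp
  have "f * s - 1 = (r * s - 1) + q * \<phi> * s" using fqr by (simp add: algebra_simps)
  then have "f * s - 1 \<in> Pgt \<nu> 0" using Pgt_add[OF vn rs1 qps] by metis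
  then show ?thesis using s0' by blast
qed

theorem lemma1p4:
  fixes v :: "'a::field \<Rightarrow> 'g::linordered_ab_group_add"
    and A :: "'i::linorder set"
    and \<rho> :: "'i \<Rightarrow> 'a poly \<Rightarrow> 'g"
    and f :: "'a poly"
  assumes "valued_field v"
    and "contains_divisible_hull (value_group v)"
    and "\<forall>i\<in>A. in_T v (\<rho> i) \<and> inner_node (\<rho> i)"
    and "\<forall>i\<in>A. \<forall>j\<in>A. i < j \<longrightarrow> val_less (\<rho> i) (\<rho> j)"
    and "\<forall>i\<in>A. \<exists>j\<in>A. i < j"
    and "f \<noteq> 0"
  shows "C_stable A \<rho> f \<longleftrightarrow> (\<exists>i\<in>A. ini (\<rho> i) f \<in> Units (Gr (\<rho> i)))"
proof
  assume "C_stable A \<rho> f"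
  then obtain i where i: "i \<in> A" "\<forall>j\<in>A. i < j \<longrightarrow> \<rho> j f = \<rho> i f"
    unfolding C_stable_def by blast
  obtain j where j: "j \<in> A" "i < j" using assms(5) i(1) by blast
  have lt: "val_less (\<rho> i) (\<rho> j)" using assms(4) i(1) j by blast
  have le: "val_le (\<rho> i) (\<rho> j)" using lt by (simp add: val_less_def)
  have ex: "\<exists>h. h \<noteq> 0 \<and> \<rho> i h < \<rho> j h" using lt by (auto simp: val_less_def val_le_def not_le)
  have Ti: "in_T v (\<rho> i)" and Tj: "in_T v (\<rho> j)" using assms(3) i(1) j(1) by auto
  have const: "\<forall>c. c \<noteq> 0 \<longrightarrow> \<rho> i [:c:] = \<rho> j [:c:]" using Ti Tj by (simp add: in_T_def)
  obtain s where s: "s \<noteq> 0" "f * s - 1 \<in> Pgt (\<rho> j) 0"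
    using core[OF inT_isval[OF Ti] inT_isval[OF Tj] le const ex assms(6)] i(2) j by metis
  show "\<exists>i\<in>A. ini (\<rho> i) f \<in> Units (Gr (\<rho> i))"
    using unit_of_close[OF inT_isval[OF Tj] assms(6) s] j(1) by blast
next
  assume "\<exists>i\<in>A. ini (\<rho> i) f \<in> Units (Gr (\<rho> i))"
  then obtain i where i: "i \<in> A" "ini (\<rho> i) f \<in> Units (Gr (\<rho> i))" by blast
  have Ti: "in_T v (\<rho> i)" using assms(3) i(1) by auto
  obtain a where a: "a \<noteq> 0" "a * f - 1 \<in> Pgt (\<rho> i) 0"
    using close_of_unit[OF inT_isval[OF Ti] assms(6) i(2)] by blast
  have "\<rho> j f = \<rho> i f" if "j \<in> A" "i < j" for j
  proof -
    have "val_le (\<rho> i) (\<rho> j)" using assms(4) i(1) that by (simp add: val_less_def)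
    moreover have "in_T v (\<rho> j)" using assms(3) that(1) by auto
    ultimately show ?thesis using stable_of_close[OF inT_isval[OF Ti] inT_isval _ assms(6) a] by blast
  qed
  then show "C_stable A \<rho> f" unfolding C_stable_def using i(1) by blast
qed

end
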